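(* Let $G$ be an $n\times n$ Game of Primes grid (defined in the context) and suppose some cell of $G$ has at least four neighbors containing prime numbers. Then the cycle length of $G$ is even.
   Context: A Game of Primes (GOPM) grid of dimension $n$ is an $n\times n$ grid whose cells are filled with the $n^2$ natural numbers $a, a+d, a+2d,\dots,a+(n^2-1)d$ (for fixed integers $a\ge 1$, $d\ge 1$) in snake-like (boustrophedon) order: the first row is filled left to right starting with $a$ in the top-left cell, the second row right to left, the third row left to right, and so on. Two distinct cells are neighbors if they are adjacent horizontally, vertically or diagonally. Each cell is in one of two states, excited or dormant; a configuration ("day") assigns a state to every cell. For a configuration $s$ and a cell $c$, let $N_s(c)$ be the number of neighbors of $c$ that contain a prime number or are excited in $s$ (or both). The update map $F$ sends $s$ to $F(s)$ where: a cell dormant in $s$ becomes excited iff $N_s(c)\ge 3$ (otherwise stays dormant); a cell excited in $s$ becomes dormant iff $N_s(c)\ge 4$ or $N_s(c)=0$ (otherwise stays excited). Day $0$, $s_0$, has all cells dormant, and $s_{t+1}=F(s_t)$. Since there are finitely many configurations, the sequence $(s_t)$ is eventually periodic; the cycle length of $G$ is the least $p\ge 1$ such that $s_{t+p}=s_t$ for all sufficiently large $t$. *)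

theory Defs
  imports "HOL-Computational_Algebra.Primes"
begin

definition cells :: "nat \<Rightarrow> (nat \<times> nat) set" where
  "cells n = {0..<n} \<times> {0..<n}"

text \<open>Snake (boustrophedon) position: even rows left to right, odd rows right to left.\<close>
definition snake_index :: "nat \<Rightarrow> nat \<times> nat \<Rightarrow> nat" where
  "snake_index n c = (if even (fst c) then fst c * n + snd c else fst c * n + (n - 1 - snd c))"

definition cell_val :: "nat \<Rightarrow> nat \<Rightarrow> nat \<Rightarrow> nat \<times> nat \<Rightarrow> nat" where
  "cell_val n a d c = a + snake_index n c * d"

definition nbr :: "nat \<times> nat \<Rightarrow> nat \<times> nat \<Rightarrow> bool" where
  "nbr c c' \<longleftrightarrow> c \<noteq> c' \<and> (fst c \<le> fst c' + 1 \<and> fst c' \<le> fst c + 1)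
                 \<and> (snd c \<le> snd c' + 1 \<and> snd c' \<le> snd c + 1)"

definition neighbors :: "nat \<Rightarrow> nat \<times> nat \<Rightarrow> (nat \<times> nat) set" where
  "neighbors n c = {c' \<in> cells n. nbr c c'}"

text \<open>A configuration is the set of excited cells.\<close>
definition Ncount :: "nat \<Rightarrow> nat \<Rightarrow> nat \<Rightarrow> (nat \<times> nat) set \<Rightarrow> nat \<times> nat \<Rightarrow> nat" where
  "Ncount n a d s c = card {c' \<in> neighbors n c. prime (cell_val n a d c') \<or> c' \<in> s}"

definition step :: "nat \<Rightarrow> nat \<Rightarrow> nat \<Rightarrow> (nat \<times> nat) set \<Rightarrow> (nat \<times> nat) set" where
  "step n a d s = {c \<in> cells n.
      (c \<notin> s \<and> Ncount n a d s c \<ge> 3) \<or>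
      (c \<in> s \<and> \<not> (Ncount n a d s c \<ge> 4 \<or> Ncount n a d s c = 0))}"

definition day :: "nat \<Rightarrow> nat \<Rightarrow> nat \<Rightarrow> nat \<Rightarrow> (nat \<times> nat) set" where
  "day n a d t = (step n a d ^^ t) {}"

definition cycle_length :: "nat \<Rightarrow> nat \<Rightarrow> nat \<Rightarrow> nat" where
  "cycle_length n a d = (LEAST p. p \<ge> 1 \<and> (\<exists>T. \<forall>t\<ge>T. day n a d (t + p) = day n a d t))"

end

theory Submission
  imports Defs
begin

lemma day_Suc: "day n a d (Suc t) = step n a d (day n a d t)"
  by (simp add: day_def)

lemma day_sub: "day n a d t \<subseteq> cells n"
proof (cases t)
  case 0 then show ?thesis by (simp add: day_def)
next
  case (Suc m) then show ?thesis unfolding Suc day_Suc step_def by blast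
qed

lemma finite_cells: "finite (cells n)"
  by (simp add: cells_def)

lemma day_shift:
  assumes "day n a d i = day n a d j"
  shows "day n a d (i + k) = day n a d (j + k)"
proof (induction k)
  case 0 then show ?case using assms by simp
next
  case (Suc k)
  have "day n a d (i + Suc k) = step n a d (day n a d (i + k))"
    using day_Suc[of n a d "i + k"] by simp
  also have "\<dots> = step n a d (day n a d (j + k))" using Suc.IH by (rule arg_cong)
  also have "\<dots> = day n a d (j + Suc k)"
    using day_Suc[of n a d "j + k"] by simp
  finally show ?case .
qed

lemma period_exists: "\<exists>p. p \<ge> 1 \<and> (\<exists>T. \<forall>t\<ge>T. day n a d (t + p) = day n a d t)"
proof -
  have "range (day n a d) \<subseteq> Pow (cells n)" using day_sub[of n a d] by blast
  hence fr: "finite (range (day n a d))"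
    by (rule finite_subset) (simp add: finite_cells)
  have ni: "\<not> inj (day n a d)"
  proof
    assume "inj (day n a d)"
    hence "finite (UNIV :: nat set)" using fr by (rule finite_imageD[rotated])
    thus False by simp
  qed
  then obtain i0 j0 where ij0: "i0 \<noteq> j0" "day n a d i0 = day n a d j0" unfolding inj_def by blast
  obtain i j where ij: "i < j" "day n a d i = day n a d j"
  proof (cases "i0 < j0")
    case True then show ?thesis using that ij0 by blast
  next
    case False then have "j0 < i0" using ij0(1) by simp
    then show ?thesis using that ij0(2) by simp
  qed
  have per: "\<forall>t\<ge>i. day n a d (t + (j - i)) = day n a d t"
  proof (intro allI impI)
    fix t assume "i \<le> t"
    then obtain k where k: "t = i + k" using le_Suc_ex by blast
    have "day n a d (j + k) = day n a d (i + k)" using day_shift[OF ij(2), of k] by simp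
    moreover have "t + (j - i) = j + k" using k ij(1) by simp
    ultimately show "day n a d (t + (j - i)) = day n a d t" using k by metis
  qed
  have "j - i \<ge> 1" using ij(1) by simp
  thus ?thesis using per by blast
qed

lemma alternate:
  assumes c: "c \<in> cells n" and four: "card {c' \<in> neighbors n c. prime (cell_val n a d c')} \<ge> 4"
  shows "c \<in> day n a d t \<longleftrightarrow> odd t"
proof (induction t)
  case 0 then show ?case by (simp add: day_def)
next
  case (Suc t)
  have fin: "finite {c' \<in> neighbors n c. prime (cell_val n a d c') \<or> c' \<in> s}" for s
    using finite_cells by (rule finite_subset[rotated]) (auto simp: neighbors_def)
  have N: "Ncount n a d s c \<ge> 4" for s
  proof -
    have "card {c' \<in> neighbors n c. prime (cell_val n a d c')}
        \<le> card {c' \<in> neighbors n c. prime (cell_val n a d c') \<or> c' \<in> s}"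
      by (rule card_mono[OF fin]) auto
    thus ?thesis using four unfolding Ncount_def by linarith
  qed
  have St: "c \<in> step n a d s \<longleftrightarrow> c \<notin> s" for s
  proof -
    have "Ncount n a d s c \<ge> 4" by (rule N)
    thus ?thesis using c unfolding step_def by simp
  qed
  have "c \<in> day n a d (Suc t) \<longleftrightarrow> c \<notin> day n a d t"
    unfolding day_Suc by (rule St)
  then show ?case using Suc.IH by simp
qed

theorem theorem4p2:
  fixes n a d :: nat
  assumes "a \<ge> 1" and "d \<ge> 1"
    and "\<exists>c\<in>cells n. card {c' \<in> neighbors n c. prime (cell_val n a d c')} \<ge> 4"
  shows "even (cycle_length n a d)"
proof -
  obtain c where c: "c \<in> cells n" "card {c' \<in> neighbors n c. prime (cell_val n a d c')} \<ge> 4"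
    using assms(3) by blast
  have "(LEAST p. p \<ge> 1 \<and> (\<exists>T. \<forall>t\<ge>T. day n a d (t + p) = day n a d t)) \<ge> 1 \<and>
     (\<exists>T. \<forall>t\<ge>T. day n a d (t + (LEAST p. p \<ge> 1 \<and> (\<exists>T. \<forall>t\<ge>T. day n a d (t + p) = day n a d t))) = day n a d t)"
    by (rule LeastI_ex[OF period_exists])
  hence "\<exists>T. \<forall>t\<ge>T. day n a d (t + cycle_length n a d) = day n a d t"
    unfolding cycle_length_def by (rule conjunct2)
  then obtain T where T: "\<forall>t\<ge>T. day n a d (t + cycle_length n a d) = day n a d t" by blast
  have E: "day n a d (T + cycle_length n a d) = day n a d T" using T le_refl by blast
  have "odd (T + cycle_length n a d) \<longleftrightarrow> odd T"
    using alternate[OF c, of "T + cycle_length n a d"] alternate[OF c, of T] E by simp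
  thus ?thesis by auto
qed

end
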